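(* Let $s>0$, $\lambda\geq 0$ and $f\in\mathbb{A}^s_\lambda$. Then for every integer $n\geq 2$, $$|f^n|_{s,\lambda}\leq K_{s,n}|f|_{0,\lambda}^{n-1}|f|_{s,\lambda},$$ where $K_{s,n}=n$ for $0<s\leq 1$ and $K_{s,n}=\sum_{j=1}^{n-1}(2K_s)^j=\frac{2K_s((2K_s)^{n-1}-1)}{2K_s-1}$ for $s>1$, with $K_s=2^{s-1}$ for $s>1$. Moreover, for $s=0$ and $f\in\mathbb{A}^0_\lambda$, $|f^n|_{0,\lambda}\leq |f|_{0,\lambda}^n$.
   Context: Let $\mathbb{T}=\mathbb{R}/2\pi\mathbb{Z}$. For $f\in L^1(\mathbb{T})$, $\widehat f(n)=\frac{1}{2\pi}\int_{\mathbb{T}}f(x)e^{-inx}\,dx$. For $s,\lambda\geq 0$ the Wiener space $\mathbb{A}^s_\lambda$ is the space of $f\in L^1(\mathbb{T})$ with finite norm $|f|_{s,\lambda}:=\sum_{n\in\mathbb{Z}}(1+|n|)^s e^{\lambda|n|}|\widehat f(n)|$. *)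

theory Defs
  imports "HOL-Analysis.Analysis"
begin

text \<open>Functions on the torus R/2piZ are represented as 2pi-periodic functions real => complex.\<close>

definition L1T :: "(real \<Rightarrow> complex) \<Rightarrow> bool" where
  "L1T f \<longleftrightarrow> (\<forall>x. f (x + 2 * pi) = f x) \<and> integrable (lebesgue_on {0..2*pi}) f"

definition fourier_coeff :: "(real \<Rightarrow> complex) \<Rightarrow> int \<Rightarrow> complex" where
  "fourier_coeff f n = (1 / (2 * pi)) *\<^sub>R
     integral\<^sup>L (lebesgue_on {0..2*pi}) (\<lambda>x. f x * exp (- \<i> * of_int n * of_real x))"

definition wiener_weight :: "real \<Rightarrow> real \<Rightarrow> int \<Rightarrow> real" where
  "wiener_weight s lam n = (1 + real_of_int \<bar>n\<bar>) powr s * exp (lam * real_of_int \<bar>n\<bar>)"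

definition wiener_space :: "real \<Rightarrow> real \<Rightarrow> (real \<Rightarrow> complex) set" where
  "wiener_space s lam = {f. L1T f \<and>
     (\<lambda>n. wiener_weight s lam n * cmod (fourier_coeff f n)) summable_on (UNIV :: int set)}"

definition wiener_norm :: "real \<Rightarrow> real \<Rightarrow> (real \<Rightarrow> complex) \<Rightarrow> real" where
  "wiener_norm s lam f = (\<Sum>\<^sub>\<infinity>n\<in>(UNIV :: int set). wiener_weight s lam n * cmod (fourier_coeff f n))"

definition K_s :: "real \<Rightarrow> real" where
  "K_s s = 2 powr (s - 1)"

definition K_sn :: "real \<Rightarrow> nat \<Rightarrow> real" where
  "K_sn s n = (if s \<le> 1 then real n else (\<Sum>j=1..n-1. (2 * K_s s) ^ j))"

end

theory Submission imports Defs "HOL-Library.Nat_Bijection" begin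


abbreviation MT :: "real measure" where "MT \<equiv> lebesgue_on {0..2*pi}"

definition ee :: "int \<Rightarrow> real \<Rightarrow> complex" where
  "ee k x = exp (\<i> * of_int k * of_real x)"

lemma ee_alt: "ee k x = exp (\<i> * of_real (of_int k * x))"
  unfolding ee_def by (simp add: mult.assoc)

lemma ee_norm [simp]: "norm (ee k x) = 1"
  unfolding ee_alt by (rule norm_exp_i_times)

lemma ee_mult: "ee j x * ee k x = ee (j + k) x"
  unfolding ee_def by (simp add: exp_add[symmetric] algebra_simps)

lemma ee_zero [simp]: "ee 0 x = 1"
  unfolding ee_def by simp

lemma ee_cont: "continuous_on UNIV (ee k)"
  unfolding ee_def by (intro continuous_intros)

lemma meas_cont:
  fixes g :: "real \<Rightarrow> 'b::euclidean_space"
  assumes "continuous_on UNIV g" shows "g \<in> borel_measurable MT"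
proof -
  have "g \<in> borel_measurable borel" using assms by (rule borel_measurable_continuous_onI)
  then show ?thesis by (simp add: measurable_completion measurable_restrict_space1)
qed

lemma int_cont:
  fixes g :: "real \<Rightarrow> 'b::euclidean_space"
  assumes "continuous_on UNIV g" shows "integrable MT g"
  using assms by (intro continuous_imp_integrable_real) (rule continuous_on_subset, auto)

lemma int_mult_bdd:
  fixes h g :: "real \<Rightarrow> complex"
  assumes h: "integrable MT h" and g: "g \<in> borel_measurable MT" and B: "\<And>x. norm (g x) \<le> B"
  shows "integrable MT (\<lambda>x. h x * g x)"
proof -
  have i1: "integrable MT (\<lambda>x. B *\<^sub>R h x)" using h by simp
  have i2: "(\<lambda>x. h x * g x) \<in> borel_measurable MT" using h g by measurable
  have "norm (h x * g x) \<le> norm (B *\<^sub>R h x)" for x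
  proof -
    have "norm (h x * g x) = norm (h x) * norm (g x)" by (simp add: norm_mult)
    also have "\<dots> \<le> norm (h x) * B" by (rule mult_left_mono[OF B], simp)
    also have "\<dots> \<le> norm (B *\<^sub>R h x)" 
      using mult_left_mono[OF abs_ge_self[of B] norm_ge_zero[of "h x"]] by (simp add: mult.commute)
    finally show ?thesis .
  qed
  then have "AE x in MT. norm (h x * g x) \<le> norm (B *\<^sub>R h x)" by simp
  from Bochner_Integration.integrable_bound[OF i1 i2 this] show ?thesis .
qed

lemma ee_has_integral:
  "(ee m has_integral (if m = 0 then 2*pi else 0)) {0..2*pi}"
proof (cases "m = 0")
  case True
  have "ee 0 = (\<lambda>x. 1)" by (rule ext) simp
  then show ?thesis using True has_integral_const_real[of "1::complex" 0 "2*pi"] by (simp add: scaleR_conv_of_real)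
next
  case False
  define F where "F x = ee m x / (\<i> * of_int m)" for x
  have d: "(F has_vector_derivative ee m x) (at x within {0..2*pi})" for x
  proof -
    have "((\<lambda>z. exp (\<i> * of_int m * z) / (\<i> * of_int m)) has_field_derivative
            (\<i> * of_int m) * exp (\<i> * of_int m * of_real x) / (\<i> * of_int m)) (at (of_real x))"
      using False by (intro derivative_eq_intros) auto
    then have "((\<lambda>z. exp (\<i> * of_int m * z) / (\<i> * of_int m)) has_field_derivative
            ee m x) (at (of_real x))" using False by (simp add: ee_def)
    from has_vector_derivative_real_field[OF this] show ?thesis unfolding F_def[abs_def] ee_def by simp
  qed
  have "(ee m has_integral (F (2*pi) - F 0)) {0..2*pi}"
    by (rule fundamental_theorem_of_calculus) (use d in auto)
  moreover have e2: "ee m (2*pi) = 1"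
  proof -
    have "ee m (2*pi) = exp ((2 * of_int m * pi) * \<i>)" by (simp add: ee_def algebra_simps)
    also have "\<dots> = 1" by (rule exp_integer_2pi) simp
    finally show ?thesis .
  qed
  moreover have e0: "ee m 0 = 1" by (simp add: ee_def)
  ultimately have "F (2*pi) - F 0 = 0" unfolding F_def by (simp only: e0 e2) simp
  with \<open>(ee m has_integral (F (2*pi) - F 0)) {0..2*pi}\<close> False show ?thesis by simp
qed

lemma ee_integral: "integral\<^sup>L MT (ee m) = (if m = 0 then 2*pi else 0)"
proof -
  have "integral\<^sup>L MT (ee m) = integral {0..2*pi} (ee m)"
    by (rule lebesgue_integral_eq_integral) (auto intro: int_cont ee_cont)
  also have "\<dots> = (if m = 0 then 2*pi else 0)" by (rule integral_unique[OF ee_has_integral])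
  finally show ?thesis .
qed



lemma conv_inf:
  fixes p :: "int \<Rightarrow> 'a::banach"
  assumes "(\<lambda>k. norm (p k)) summable_on UNIV"
  shows "(\<lambda>n. p (int_decode n)) sums (infsum p UNIV)"
    and "summable (\<lambda>n. norm (p (int_decode n)))"
proof -
  have "p summable_on UNIV" using assms by (rule abs_summable_summable)
  then have "(p has_sum infsum p UNIV) UNIV" by (rule has_sum_infsum)
  then have "((\<lambda>n. p (int_decode n)) has_sum infsum p UNIV) UNIV"
    using has_sum_reindex_bij_betw[OF bij_int_decode] by blast
  then show "(\<lambda>n. p (int_decode n)) sums (infsum p UNIV)" by (rule has_sum_imp_sums)
  have "((\<lambda>k. norm (p k)) has_sum infsum (\<lambda>k. norm (p k)) UNIV) UNIV" using assms by (rule has_sum_infsum)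
  then have "((\<lambda>n. norm (p (int_decode n))) has_sum infsum (\<lambda>k. norm (p k)) UNIV) UNIV"
    using has_sum_reindex_bij_betw[OF bij_int_decode, of "\<lambda>k. norm (p k)"] by blast
  then show "summable (\<lambda>n. norm (p (int_decode n)))" using has_sum_imp_sums sums_summable by blast
qed

lemma abs_summ_cmp:
  fixes p :: "int \<Rightarrow> 'a::real_normed_vector"
  assumes "(\<lambda>k. norm (c k)) summable_on UNIV" "\<And>k. norm (p k) \<le> norm (c k) * B"
  shows "(\<lambda>k. norm (p k)) summable_on UNIV"
proof (rule summable_on_comparison_test[of "\<lambda>k. norm (c k) * \<bar>B\<bar>"])
  show "(\<lambda>k. norm (c k) * \<bar>B\<bar>) summable_on UNIV" using assms(1) by (rule summable_on_cmult_left)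
  show "norm (p k) \<le> norm (c k) * \<bar>B\<bar>" for k
    using assms(2)[of k] mult_left_mono[OF abs_ge_self[of B] norm_ge_zero[of "c k"]] by linarith
qed auto

lemma INTSUM:
  fixes c :: "int \<Rightarrow> complex" and u :: "int \<Rightarrow> real \<Rightarrow> complex"
  assumes c: "(\<lambda>k. norm (c k)) summable_on UNIV"
    and u: "\<And>k. u k \<in> borel_measurable MT" and B: "\<And>k x. norm (u k x) \<le> B"
  shows "integrable MT (\<lambda>x. \<Sum>\<^sub>\<infinity>k. c k * u k x)"
    and "integral\<^sup>L MT (\<lambda>x. \<Sum>\<^sub>\<infinity>k. c k * u k x) = (\<Sum>\<^sub>\<infinity>k. c k * integral\<^sup>L MT (u k))"
proof -
  define f where "f i x = c (int_decode i) * u (int_decode i) x" for i x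
  have B0: "0 \<le> B" using B[of 0 0] norm_ge_zero order_trans by blast
  have fi: "integrable MT (f i)" for i
    unfolding f_def by (rule int_mult_bdd[OF _ u B]) simp
  have ptw: "(\<lambda>n. f n x) sums (\<Sum>\<^sub>\<infinity>k. c k * u k x)" and ptws: "summable (\<lambda>n. norm (f n x))" for x
  proof -
    have *: "(\<lambda>k. norm (c k * u k x)) summable_on UNIV"
      by (rule abs_summ_cmp[OF c, where B=B]) (simp add: norm_mult B mult_left_mono)
    show "(\<lambda>n. f n x) sums (\<Sum>\<^sub>\<infinity>k. c k * u k x)" using conv_inf(1)[OF *] by (simp add: f_def)
    show "summable (\<lambda>n. norm (f n x))" using conv_inf(2)[OF *] by (simp add: f_def)
  qed
  define K where "K = integral\<^sup>L MT (\<lambda>x. B)"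
  have nb: "integral\<^sup>L MT (\<lambda>x. norm (f i x)) \<le> norm (c (int_decode i)) * K" for i
  proof -
    have "integral\<^sup>L MT (\<lambda>x. norm (f i x)) \<le> integral\<^sup>L MT (\<lambda>x. norm (c (int_decode i)) * B)"
      by (rule integral_mono[OF integrable_norm[OF fi]]) (auto simp: f_def norm_mult B mult_left_mono)
    also have "\<dots> = norm (c (int_decode i)) * K" unfolding K_def by simp
    finally show ?thesis .
  qed
  have ints: "summable (\<lambda>i. integral\<^sup>L MT (\<lambda>x. norm (f i x)))"
  proof (rule summable_comparison_test[of _ "\<lambda>i. norm (c (int_decode i)) * K"])
    show "\<exists>N. \<forall>n\<ge>N. norm (integral\<^sup>L MT (\<lambda>x. norm (f n x))) \<le> norm (c (int_decode n)) * K"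
      using nb by (auto intro!: exI[of _ 0] simp: integral_nonneg_AE)
    have "summable (\<lambda>n. norm (norm (c (int_decode n))))" using conv_inf(2)[of c] c by simp
    then show "summable (\<lambda>i. norm (c (int_decode i)) * K)" by (intro summable_mult2) simp
  qed
  have S: "integrable MT (\<lambda>x. \<Sum>i. f i x)" "integral\<^sup>L MT (\<lambda>x. \<Sum>i. f i x) = (\<Sum>i. integral\<^sup>L MT (f i))"
    using integrable_suminf[OF fi _ ints] integral_suminf[OF fi _ ints] ptws by auto
  have eqf: "(\<lambda>x. \<Sum>i. f i x) = (\<lambda>x. \<Sum>\<^sub>\<infinity>k. c k * u k x)"
    using ptw by (metis sums_unique)
  show "integrable MT (\<lambda>x. \<Sum>\<^sub>\<infinity>k. c k * u k x)" using S(1) eqf by simp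
  have nbi: "norm (integral\<^sup>L MT (u k)) \<le> K" for k
  proof -
    have "integrable MT (u k)" using int_mult_bdd[OF _ u B, of "\<lambda>x. 1" k] by simp
    have "norm (integral\<^sup>L MT (u k)) \<le> integral\<^sup>L MT (\<lambda>x. norm (u k x))" by (rule Bochner_Integration.integral_norm_bound)
    also have "\<dots> \<le> K" unfolding K_def by (rule integral_mono) (use \<open>integrable MT (u k)\<close> B in auto)
    finally show ?thesis .
  qed
  have *: "(\<lambda>k. norm (c k * integral\<^sup>L MT (u k))) summable_on UNIV"
    by (rule abs_summ_cmp[OF c, where B=K]) (simp add: norm_mult nbi mult_left_mono)
  have "(\<lambda>i. integral\<^sup>L MT (f i)) sums (\<Sum>\<^sub>\<infinity>k. c k * integral\<^sup>L MT (u k))"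
  proof -
    have "integral\<^sup>L MT (f i) = c (int_decode i) * integral\<^sup>L MT (u (int_decode i))" for i
      unfolding f_def[abs_def] by simp
    then show ?thesis using conv_inf(1)[OF *] by simp
  qed
  then show "integral\<^sup>L MT (\<lambda>x. \<Sum>\<^sub>\<infinity>k. c k * u k x) = (\<Sum>\<^sub>\<infinity>k. c k * integral\<^sup>L MT (u k))"
    using S(2) eqf sums_unique by metis
qed

definition FS :: "(int \<Rightarrow> complex) \<Rightarrow> real \<Rightarrow> complex" where
  "FS c x = (\<Sum>\<^sub>\<infinity>k. c k * ee k x)"

lemma FS_cont:
  assumes c: "(\<lambda>k. norm (c k)) summable_on UNIV"
  shows "continuous_on UNIV (FS c)"
proof -
  have ul: "uniform_limit UNIV (\<lambda>X y. \<Sum>k\<in>X. c k * ee k y) (\<lambda>y. \<Sum>\<^sub>\<infinity>k. c k * ee k y) (finite_subsets_at_top UNIV)"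
    by (rule Weierstrass_m_test_general[OF _ c]) (simp add: norm_mult)
  show ?thesis unfolding FS_def
    by (rule uniform_limit_theorem[OF _ ul])
       (auto intro!: always_eventually continuous_on_sum continuous_on_mult continuous_on_const ee_cont)
qed

lemma FS_bound:
  assumes c: "(\<lambda>k. norm (c k)) summable_on UNIV"
  shows "norm (FS c x) \<le> (\<Sum>\<^sub>\<infinity>k. norm (c k))"
proof -
  have "(\<lambda>k. norm (c k * ee k x)) summable_on UNIV" using c by (simp add: norm_mult)
  then have "(\<lambda>k. c k * ee k x) summable_on UNIV" by (rule abs_summable_summable)
  then show ?thesis unfolding FS_def
    by (rule norm_infsum_le[OF has_sum_infsum has_sum_infsum]) (auto simp: norm_mult c)
qed



lemma infsum_single_int:
  fixes a :: "'a::{comm_monoid_add, t2_space}"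
  shows "(\<Sum>\<^sub>\<infinity>k::int. if k = n then a else 0) = a"
proof -
  have "(\<Sum>\<^sub>\<infinity>k::int. if k = n then a else 0) = (\<Sum>\<^sub>\<infinity>k\<in>{n}. if k = n then a else 0)"
    by (rule infsum_cong_neutral) auto
  then show ?thesis by simp
qed

lemma fc_alt: "fourier_coeff g n = (1 / (2*pi)) *\<^sub>R integral\<^sup>L MT (\<lambda>x. g x * ee (-n) x)"
  unfolding fourier_coeff_def ee_def by simp

lemma FS_meas:
  assumes "(\<lambda>k. norm (c k)) summable_on UNIV" shows "FS c \<in> borel_measurable MT"
  using FS_cont[OF assms] by (rule meas_cont)

lemma FS_mult_int:
  assumes c: "(\<lambda>k. norm (c k)) summable_on UNIV"
    and phi: "phi \<in> borel_measurable MT" and B: "\<And>x. norm (phi x) \<le> B"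
  shows "integrable MT (\<lambda>x. FS c x * phi x)"
    and "integral\<^sup>L MT (\<lambda>x. FS c x * phi x) = (\<Sum>\<^sub>\<infinity>k. c k * integral\<^sup>L MT (\<lambda>x. ee k x * phi x))"
proof -
  have eq: "(\<lambda>x. FS c x * phi x) = (\<lambda>x. \<Sum>\<^sub>\<infinity>k. c k * (ee k x * phi x))"
    unfolding FS_def by (simp add: infsum_cmult_left'[symmetric] mult.assoc)
  have u: "(\<lambda>x. ee k x * phi x) \<in> borel_measurable MT" for k
    using meas_cont[OF ee_cont] phi by measurable
  have b: "norm (ee k x * phi x) \<le> B" for k x by (simp add: norm_mult B)
  show "integrable MT (\<lambda>x. FS c x * phi x)" unfolding eq by (rule INTSUM(1)[OF c u b])
  show "integral\<^sup>L MT (\<lambda>x. FS c x * phi x) = (\<Sum>\<^sub>\<infinity>k. c k * integral\<^sup>L MT (\<lambda>x. ee k x * phi x))"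
    unfolding eq by (rule INTSUM(2)[OF c u b])
qed

lemma int_ee_ee: "integral\<^sup>L MT (\<lambda>x. ee k x * ee m x) = (if k + m = 0 then 2*pi else 0)"
  by (simp add: ee_mult ee_integral)

lemma fc_FS:
  assumes c: "(\<lambda>k. norm (c k)) summable_on UNIV"
  shows "fourier_coeff (FS c) n = c n"
proof -
  have "integral\<^sup>L MT (\<lambda>x. FS c x * ee (-n) x) = (\<Sum>\<^sub>\<infinity>k. c k * integral\<^sup>L MT (\<lambda>x. ee k x * ee (-n) x))"
    by (rule FS_mult_int(2)[OF c meas_cont[OF ee_cont], where B=1]) simp
  also have "\<dots> = (\<Sum>\<^sub>\<infinity>k. if k = n then c n * (2*pi) else 0)"
    by (rule infsum_cong) (simp add: int_ee_ee)
  also have "\<dots> = c n * (2*pi)" by (rule infsum_single_int)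
  finally show ?thesis unfolding fc_alt by (simp add: scaleR_conv_of_real)
qed

lemma fc_prod:
  assumes a: "(\<lambda>k. norm (a k)) summable_on UNIV" and b: "(\<lambda>k. norm (b k)) summable_on UNIV"
  shows "fourier_coeff (\<lambda>x. FS a x * FS b x) n = (\<Sum>\<^sub>\<infinity>j. a j * b (n - j))"
proof -
  define B where "B = (\<Sum>\<^sub>\<infinity>k. norm (b k))"
  have phim: "(\<lambda>x. FS b x * ee (-n) x) \<in> borel_measurable MT"
    using FS_meas[OF b] meas_cont[OF ee_cont] by measurable
  have phib: "norm (FS b x * ee (-n) x) \<le> B" for x
    using FS_bound[OF b] by (simp add: norm_mult B_def)
  have "integral\<^sup>L MT (\<lambda>x. FS a x * FS b x * ee (-n) x)
        = integral\<^sup>L MT (\<lambda>x. FS a x * (FS b x * ee (-n) x))" by (simp add: mult.assoc)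
  also have "\<dots> = (\<Sum>\<^sub>\<infinity>j. a j * integral\<^sup>L MT (\<lambda>x. ee j x * (FS b x * ee (-n) x)))"
    by (rule FS_mult_int(2)[OF a phim phib])
  also have "\<dots> = (\<Sum>\<^sub>\<infinity>j. a j * ((2*pi) * b (n - j)))"
  proof (rule infsum_cong)
    fix j
    have "integral\<^sup>L MT (\<lambda>x. ee j x * (FS b x * ee (-n) x)) = integral\<^sup>L MT (\<lambda>x. FS b x * ee (-(n-j)) x)"
      by (rule Bochner_Integration.integral_cong) (auto simp: ee_mult[symmetric] algebra_simps ee_mult)
    also have "\<dots> = (2*pi) * b (n - j)"
      using fc_FS[OF b, of "n - j"] unfolding fc_alt by (simp add: scaleR_conv_of_real field_simps)
    finally show "a j * integral\<^sup>L MT (\<lambda>x. ee j x * (FS b x * ee (-n) x)) = a j * ((2*pi) * b (n - j))" by simp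
  qed
  also have "\<dots> = (2*pi) * (\<Sum>\<^sub>\<infinity>j. a j * b (n - j))"
    by (simp add: infsum_cmult_right'[symmetric] algebra_simps)
  finally show ?thesis unfolding fc_alt by (simp add: scaleR_conv_of_real)
qed



lemma space_MT [simp]: "space MT = {0..2*pi}" by simp

lemma int_mult_cont:
  fixes h g :: "real \<Rightarrow> complex"
  assumes h: "integrable MT h" and g: "continuous_on UNIV g"
  shows "integrable MT (\<lambda>x. h x * g x)"
proof -
  have "compact (g ` {0..2*pi})" by (rule compact_continuous_image[OF continuous_on_subset[OF g]]) auto
  then obtain B where B: "\<And>x. x \<in> {0..2*pi} \<Longrightarrow> norm (g x) \<le> B"
    using compact_imp_bounded bounded_iff by (metis image_eqI)
  have i1: "integrable MT (\<lambda>x. B *\<^sub>R h x)" using h by simp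
  have i2: "(\<lambda>x. h x * g x) \<in> borel_measurable MT" using h meas_cont[OF g] by measurable
  have "norm (h x * g x) \<le> norm (B *\<^sub>R h x)" if "x \<in> {0..2*pi}" for x
  proof -
    have "norm (h x * g x) = norm (h x) * norm (g x)" by (simp add: norm_mult)
    also have "\<dots> \<le> norm (h x) * B" by (rule mult_left_mono[OF B[OF that]], simp)
    also have "\<dots> \<le> norm (B *\<^sub>R h x)"
      using mult_left_mono[OF abs_ge_self[of B] norm_ge_zero[of "h x"]] by (simp add: mult.commute)
    finally show ?thesis .
  qed
  then have "AE x in MT. norm (h x * g x) \<le> norm (B *\<^sub>R h x)" by (intro AE_I2) simp
  from Bochner_Integration.integrable_bound[OF i1 i2 this] show ?thesis .
qed

locale zc =
  fixes h :: "real \<Rightarrow> complex"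
  assumes h: "integrable MT h"
    and z: "\<And>k. integral\<^sup>L MT (\<lambda>x. h x * ee k x) = 0"
begin

definition Ok :: "(real \<Rightarrow> complex) \<Rightarrow> bool" where
  "Ok psi \<longleftrightarrow> (\<forall>k. integral\<^sup>L MT (\<lambda>x. h x * psi x * ee k x) = 0)"

definition good :: "(real \<Rightarrow> complex) \<Rightarrow> bool" where
  "good phi \<longleftrightarrow> continuous_on UNIV phi \<and>
     (\<forall>psi. continuous_on UNIV psi \<longrightarrow> Ok psi \<longrightarrow> Ok (\<lambda>x. phi x * psi x))"

lemma Ok_one: "Ok (\<lambda>x. 1)"
  unfolding Ok_def using z by simp

lemma good_const: "good (\<lambda>x. c)"
  unfolding good_def Ok_def
  by (auto simp: mult.assoc[symmetric] mult.commute[of _ c] intro: continuous_on_const)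
     (simp add: mult.assoc)

lemma good_ee: "good (ee j)"
proof -
  have "Ok (\<lambda>x. ee j x * psi x)" if "Ok psi" for psi
    unfolding Ok_def
  proof
    fix k
    have "(\<lambda>x. h x * (ee j x * psi x) * ee k x) = (\<lambda>x. h x * psi x * ee (j + k) x)"
      by (auto simp: ee_mult[symmetric] algebra_simps)
    then show "integral\<^sup>L MT (\<lambda>x. h x * (ee j x * psi x) * ee k x) = 0"
      using that unfolding Ok_def by simp
  qed
  then show ?thesis unfolding good_def using ee_cont by blast
qed

lemma good_add: assumes "good f" "good g" shows "good (\<lambda>x. f x + g x)"
proof -
  have cf: "continuous_on UNIV f" and cg: "continuous_on UNIV g" using assms unfolding good_def by auto
  have "Ok (\<lambda>x. (f x + g x) * psi x)" if psi: "continuous_on UNIV psi" "Ok psi" for psi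
    unfolding Ok_def
  proof
    fix k
    have i1: "integrable MT (\<lambda>x. h x * (f x * psi x * ee k x))"
      by (rule int_mult_cont[OF h]) (intro continuous_intros cf psi ee_cont)
    have i2: "integrable MT (\<lambda>x. h x * (g x * psi x * ee k x))"
      by (rule int_mult_cont[OF h]) (intro continuous_intros cg psi ee_cont)
    have "integral\<^sup>L MT (\<lambda>x. h x * ((f x + g x) * psi x) * ee k x)
        = integral\<^sup>L MT (\<lambda>x. h x * (f x * psi x * ee k x) + h x * (g x * psi x * ee k x))"
      by (simp add: algebra_simps)
    also have "\<dots> = integral\<^sup>L MT (\<lambda>x. h x * (f x * psi x) * ee k x) + integral\<^sup>L MT (\<lambda>x. h x * (g x * psi x) * ee k x)"
      using Bochner_Integration.integral_add[OF i1 i2] by (simp add: mult.assoc)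
    also have "\<dots> = 0" using assms psi unfolding good_def Ok_def by simp
    finally show "integral\<^sup>L MT (\<lambda>x. h x * ((f x + g x) * psi x) * ee k x) = 0" .
  qed
  then show ?thesis unfolding good_def using cf cg by (auto intro: continuous_intros)
qed

lemma good_mult: assumes "good f" "good g" shows "good (\<lambda>x. f x * g x)"
proof -
  have cf: "continuous_on UNIV f" and cg: "continuous_on UNIV g" using assms unfolding good_def by auto
  have "Ok (\<lambda>x. (f x * g x) * psi x)" if psi: "continuous_on UNIV psi" "Ok psi" for psi
  proof -
    have "Ok (\<lambda>x. g x * psi x)" using assms(2) psi unfolding good_def by blast
    moreover have "continuous_on UNIV (\<lambda>x. g x * psi x)" by (intro continuous_intros cg psi)
    ultimately have "Ok (\<lambda>x. f x * (g x * psi x))" using assms(1) unfolding good_def by blast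
    then show ?thesis by (simp add: mult.assoc)
  qed
  then show ?thesis unfolding good_def using cf cg by (auto intro: continuous_intros)
qed

lemma good_cong: "good f \<Longrightarrow> (\<And>x. f x = g x) \<Longrightarrow> good g"
proof -
  assume "good f" "\<And>x. f x = g x"
  then have "f = g" by auto
  then show "good g" using \<open>good f\<close> by simp
qed

lemma good_cos: "good (\<lambda>x. complex_of_real (cos x))"
proof (rule good_cong)
  show "good (\<lambda>x. (1/2) * ee 1 x + (1/2) * ee (-1) x)"
    by (intro good_add good_mult good_const good_ee)
  show "(1/2) * ee 1 x + (1/2) * ee (-1) x = complex_of_real (cos x)" for x
    unfolding ee_def by (simp add: cos_exp_eq cos_of_real[symmetric] field_simps)
qed

lemma good_sin: "good (\<lambda>x. complex_of_real (sin x))"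
proof (rule good_cong)
  show "good (\<lambda>x. (1/(2*\<i>)) * ee 1 x + (-1/(2*\<i>)) * ee (-1) x)"
    by (intro good_add good_mult good_const good_ee)
  show "(1/(2*\<i>)) * ee 1 x + (-1/(2*\<i>)) * ee (-1) x = complex_of_real (sin x)" for x
    unfolding ee_def by (simp add: sin_exp_eq sin_of_real[symmetric] field_simps)
qed

lemma good_poly:
  assumes "real_polynomial_function g"
  shows "good (\<lambda>x. complex_of_real (g (cis x)))"
  using assms
proof induction
  case (linear f)
  interpret L: bounded_linear f by fact
  have "f (cis x) = cos x * f 1 + sin x * f \<i>" for x
  proof -
    have "cis x = cos x *\<^sub>R 1 + sin x *\<^sub>R \<i>" by (simp add: complex_eq_iff)
    then have "f (cis x) = f (cos x *\<^sub>R 1 + sin x *\<^sub>R \<i>)" by simp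
    also have "\<dots> = cos x * f 1 + sin x * f \<i>"
      by (simp add: L.add L.scale)
    finally show ?thesis .
  qed
  then show ?case
    by (intro good_cong[OF good_add[OF good_mult[OF good_cos good_const] good_mult[OF good_sin good_const]]]) simp
next
  case (const c)
  then show ?case by (rule good_const)
next
  case (add f g)
  then show ?case by (simp add: good_add)
next
  case (mult f g)
  then show ?case by (simp add: good_mult)
qed

lemma int_poly_zero:
  assumes "real_polynomial_function g"
  shows "integral\<^sup>L MT (\<lambda>x. h x * complex_of_real (g (cis x))) = 0"
proof -
  have "Ok (\<lambda>x. complex_of_real (g (cis x)) * 1)"
    using good_poly[OF assms] Ok_one continuous_on_const unfolding good_def by blast
  then have "integral\<^sup>L MT (\<lambda>x. h x * (complex_of_real (g (cis x)) * 1) * ee 0 x) = 0"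
    unfolding Ok_def by blast
  then show ?thesis by simp
qed

end



context zc begin

lemma int_cont_zero:
  fixes psi :: "complex \<Rightarrow> real"
  assumes cpsi: "continuous_on UNIV psi"
  shows "integral\<^sup>L MT (\<lambda>x. h x * complex_of_real (psi (cis x))) = 0"
proof -
  define X where "X = integral\<^sup>L MT (\<lambda>x. h x * complex_of_real (psi (cis x)))"
  define C where "C = integral\<^sup>L MT (\<lambda>x. norm (h x))"
  have c1: "continuous_on UNIV (\<lambda>x. complex_of_real (psi (cis x)))"
    by (intro continuous_intros continuous_on_compose2[OF cpsi]) auto
  have C0: "C \<ge> 0" unfolding C_def by simp
  have bnd: "norm X \<le> e * C" if e: "e > 0" for e
  proof -
    obtain g where g: "real_polynomial_function g" and ge: "\<And>z. z \<in> sphere 0 1 \<Longrightarrow> \<bar>psi z - g z\<bar> < e"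
      using Stone_Weierstrass_real_polynomial_function[OF compact_sphere[of 0 1] continuous_on_subset[OF cpsi] e] by blast
    have cg: "continuous_on UNIV g"
      using g by (simp add: continuous_on_polymonial_function real_polynomial_function_eq)
    have c2: "continuous_on UNIV (\<lambda>x. complex_of_real (g (cis x)))"
      by (intro continuous_intros continuous_on_compose2[OF cg]) auto
    have i1: "integrable MT (\<lambda>x. h x * complex_of_real (psi (cis x)))" by (rule int_mult_cont[OF h c1])
    have i2: "integrable MT (\<lambda>x. h x * complex_of_real (g (cis x)))" by (rule int_mult_cont[OF h c2])
    have "X = X - integral\<^sup>L MT (\<lambda>x. h x * complex_of_real (g (cis x)))"
      using int_poly_zero[OF g] by simp
    also have "\<dots> = integral\<^sup>L MT (\<lambda>x. h x * complex_of_real (psi (cis x)) - h x * complex_of_real (g (cis x)))"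
      unfolding X_def by (rule Bochner_Integration.integral_diff[OF i1 i2, symmetric])
    finally have "norm X \<le> integral\<^sup>L MT (\<lambda>x. norm (h x * complex_of_real (psi (cis x)) - h x * complex_of_real (g (cis x))))"
      by (simp add: Bochner_Integration.integral_norm_bound)
    also have "\<dots> \<le> integral\<^sup>L MT (\<lambda>x. e * norm (h x))"
    proof (rule integral_mono)
      show "integrable MT (\<lambda>x. norm (h x * complex_of_real (psi (cis x)) - h x * complex_of_real (g (cis x))))"
        using i1 i2 by (intro integrable_norm Bochner_Integration.integrable_diff)
      show "integrable MT (\<lambda>x. e * norm (h x))" using h by (intro integrable_mult_right integrable_norm)
      fix x
      have "cis x \<in> sphere 0 1" by simp
      then have "\<bar>psi (cis x) - g (cis x)\<bar> \<le> e" using ge less_imp_le by blast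
      then have "norm (h x) * \<bar>psi (cis x) - g (cis x)\<bar> \<le> norm (h x) * e" by (rule mult_left_mono) simp
      moreover have "norm (h x * complex_of_real (psi (cis x)) - h x * complex_of_real (g (cis x)))
          = norm (h x) * \<bar>psi (cis x) - g (cis x)\<bar>"
        by (simp add: right_diff_distrib[symmetric] norm_mult of_real_diff[symmetric] del: of_real_diff)
      ultimately show "norm (h x * complex_of_real (psi (cis x)) - h x * complex_of_real (g (cis x))) \<le> e * norm (h x)"
        by (simp add: mult.commute)
    qed
    also have "\<dots> = e * C" unfolding C_def by simp
    finally show ?thesis .
  qed
  have "norm X = 0"
  proof (rule ccontr)
    assume "norm X \<noteq> 0"
    then have pos: "norm X > 0" by simp
    define e where "e = norm X / (C + 1)"
    have "e > 0" unfolding e_def using pos C0 by simp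
    from bnd[OF this] have "norm X \<le> norm X * (C / (C + 1))" unfolding e_def by simp
    moreover have "norm X * (C / (C + 1)) < norm X" using pos C0 by (simp add: field_simps)
    ultimately show False by simp
  qed
  then show ?thesis unfolding X_def by simp
qed

end



lemma cis_inj_aux:
  assumes "cis t = cis y" "0 < t" "t < 2*pi" "0 \<le> y" "y \<le> 2*pi"
  shows "t = y"
proof -
  have "sin t = sin y \<and> cos t = cos y" using assms(1) by (metis cis.sel)
  then obtain n :: int where n: "t = y + 2 * pi * n" using sin_cos_eq_iff by blast
  have p: "2*pi > 0" by simp
  have "2*pi*real_of_int n < 2*pi*1" using n assms by linarith
  then have "real_of_int n < 1" using mult_less_cancel_left_pos[OF p] by blast
  have "2*pi*(-1) < 2*pi*real_of_int n" using n assms by linarith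
  then have "-1 < real_of_int n" using mult_less_cancel_left_pos[OF p] by blast
  then have "n = 0" using \<open>real_of_int n < 1\<close> by linarith
  then show ?thesis using n by simp
qed

lemma meas_to_le:
  assumes "S \<in> lmeasurable" "emeasure lebesgue S < ennreal e"
  shows "measure lebesgue S \<le> e"
  using assms by (metis emeasure_eq_measure2 ennreal_less_iff measure_nonneg less_imp_le not_le ennreal_leI)

context zc begin

lemma set_int_zero:
  assumes A: "A \<in> sets MT"
  shows "set_lebesgue_integral MT A h = 0"
proof -
  have AI: "A \<subseteq> {0..2*pi}" and Al: "A \<in> sets lebesgue"
    using A by (auto simp: sets_restrict_space_iff)
  define A' where "A' = A \<inter> {0<..<2*pi}"
  have A'l: "A' \<in> sets lebesgue" unfolding A'_def using Al by auto
  have "\<forall>m::nat. \<exists>T. closed T \<and> T \<subseteq> A' \<and> A' - T \<in> lmeasurable \<and> emeasure lebesgue (A' - T) < ennreal (1 / Suc m)"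
    using sets_lebesgue_inner_closed[OF A'l] by (metis of_nat_0_less_iff zero_less_Suc zero_less_divide_1_iff)
  then obtain T where T: "\<And>m. closed (T m)" "\<And>m. T m \<subseteq> A'" "\<And>m. A' - T m \<in> lmeasurable"
      "\<And>m. emeasure lebesgue (A' - T m) < ennreal (1 / Suc m)"
    by metis
  have "\<forall>m::nat. \<exists>U. open U \<and> A' \<subseteq> U \<and> U - A' \<in> lmeasurable \<and> emeasure lebesgue (U - A') < ennreal (1 / Suc m)"
    using sets_lebesgue_outer_open[OF A'l] by (metis of_nat_0_less_iff zero_less_Suc zero_less_divide_1_iff)
  then obtain U where U: "\<And>m. open (U m)" "\<And>m. A' \<subseteq> U m" "\<And>m. U m - A' \<in> lmeasurable"
      "\<And>m. emeasure lebesgue (U m - A') < ennreal (1 / Suc m)"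
    by metis
  define TT where "TT m = (\<Union>j\<le>m. T j)" for m
  define UU where "UU m = (\<Inter>j\<le>m. U j) \<inter> {0<..<2*pi}" for m
  have TT_closed: "closed (TT m)" for m unfolding TT_def using T(1) by (intro closed_UN) auto
  have UU_open: "open (UU m)" for m unfolding UU_def using U(1) by (intro open_Int open_INT) auto
  have TT_sub: "TT m \<subseteq> A'" for m unfolding TT_def using T(2) by auto
  have UU_sup: "A' \<subseteq> UU m" for m unfolding UU_def using U(2) A'_def by auto
  have UU_sub: "UU m \<subseteq> {0<..<2*pi}" for m unfolding UU_def by auto
  have TT_mono: "m \<le> n \<Longrightarrow> TT m \<subseteq> TT n" for m n unfolding TT_def by (rule UN_mono) auto
  have UU_anti: "m \<le> n \<Longrightarrow> UU n \<subseteq> UU m" for m n unfolding UU_def by auto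
  have A'sub: "A' \<subseteq> {0<..<2*pi}" unfolding A'_def by auto
  define Z0 where "Z0 = (\<Inter>m. UU m) - (\<Union>m. TT m)"
  have negZ0: "negligible Z0"
    unfolding negligible_outer_le
  proof (intro allI impI)
    fix e :: real assume e: "e > 0"
    obtain m :: nat where m: "2 / e < real m" using reals_Archimedean2 by blast
    have me: "2 / real (Suc m) \<le> e"
    proof -
      have "2 < e * real m" using m e by (simp add: field_simps)
      then have "2 \<le> e * real (Suc m)" using e by (simp add: algebra_simps)
      then show ?thesis using e by (simp add: field_simps)
    qed
    define S where "S = (U m - A') \<union> (A' - T m)"
    have Sl: "S \<in> lmeasurable" unfolding S_def using U(3) T(3) by (intro fmeasurable.Un)
    have "Z0 \<subseteq> S"
    proof
      fix x assume x: "x \<in> Z0"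
      then have "x \<in> UU m" "x \<notin> TT m" unfolding Z0_def by auto
      then have "x \<in> U m" "x \<notin> T m" unfolding UU_def TT_def by auto
      then show "x \<in> S" unfolding S_def by auto
    qed
    moreover have "measure lebesgue S \<le> e"
    proof -
      have "measure lebesgue S \<le> measure lebesgue (U m - A') + measure lebesgue (A' - T m)"
        unfolding S_def
        by (intro measure_subadditive fmeasurableD U(3) T(3)) (metis fmeasurableD2 U(3) T(3) infinity_ennreal_def)+
      also have "\<dots> \<le> 1 / Suc m + 1 / Suc m"
        using meas_to_le[OF U(3) U(4)] meas_to_le[OF T(3) T(4)] by (intro add_mono) auto
      also have "\<dots> \<le> e" using me by simp
      finally show ?thesis .
    qed
    ultimately show "\<exists>T. Z0 \<subseteq> T \<and> T \<in> lmeasurable \<and> measure lebesgue T \<le> e" using Sl by blast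
  qed
  define Z where "Z = Z0 \<union> {0, 2*pi}"
  have negZ: "negligible Z" unfolding Z_def using negZ0 by simp
  have AEZ: "AE x in MT. x \<notin> Z"
  proof (rule AE_I'[of "Z \<inter> {0..2*pi}"])
    have "Z \<inter> {0..2*pi} \<in> null_sets lebesgue"
      using negligible_subset[OF negZ, of "Z \<inter> {0..2*pi}"] negligible_iff_null_sets by blast
    then show "Z \<inter> {0..2*pi} \<in> null_sets MT" by (subst null_sets_restrict_space) auto
  qed auto
  have "\<forall>m. \<exists>psi :: complex \<Rightarrow> real. continuous_on UNIV psi \<and> (\<forall>z. psi z \<in> closed_segment 1 0)
          \<and> (\<forall>z\<in>cis ` TT m. psi z = 1) \<and> (\<forall>z\<in>cis ` ({0..2*pi} - UU m). psi z = 0)"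
  proof
    fix m
    have bI: "bounded {0..2*pi::real}" by simp
    have c1: "compact (TT m)"
      using TT_closed bounded_subset[OF bI, of "TT m"] TT_sub A'sub
      by (meson compact_eq_bounded_closed greaterThanLessThan_subseteq_atLeastAtMost_iff order_trans order_refl)
    have c2: "compact ({0..2*pi} - UU m)"
      using closed_Diff[OF closed_atLeastAtMost UU_open] bounded_subset[OF bI]
      by (meson Diff_subset compact_eq_bounded_closed)
    have cc: "continuous_on X cis" for X :: "real set" by (intro continuous_intros)
    have k1: "closed (cis ` TT m)" by (intro compact_imp_closed compact_continuous_image cc c1)
    have k2: "closed (cis ` ({0..2*pi} - UU m))" by (intro compact_imp_closed compact_continuous_image cc c2)
    have dj: "cis ` TT m \<inter> cis ` ({0..2*pi} - UU m) = {}"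
    proof (rule ccontr)
      assume "cis ` TT m \<inter> cis ` ({0..2*pi} - UU m) \<noteq> {}"
      then obtain t y where t: "t \<in> TT m" and y: "y \<in> {0..2*pi}" "y \<notin> UU m" and ty: "cis t = cis y" by blast
      have "t \<in> {0<..<2*pi}" using t TT_sub[of m] A'sub by blast
      then have "t = y" using cis_inj_aux[OF ty] y by auto
      moreover have "t \<in> UU m" using t TT_sub UU_sup by auto
      ultimately show False using y by simp
    qed
    obtain psi :: "complex \<Rightarrow> real" where "continuous_on UNIV psi" "\<And>z. psi z \<in> closed_segment 1 0"
      "\<And>z. z \<in> cis ` TT m \<Longrightarrow> psi z = 1" "\<And>z. z \<in> cis ` ({0..2*pi} - UU m) \<Longrightarrow> psi z = 0"
      using Urysohn[OF k1 k2 dj, of 1 0] by blast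
    then show "\<exists>psi :: complex \<Rightarrow> real. continuous_on UNIV psi \<and> (\<forall>z. psi z \<in> closed_segment 1 0)
          \<and> (\<forall>z\<in>cis ` TT m. psi z = 1) \<and> (\<forall>z\<in>cis ` ({0..2*pi} - UU m). psi z = 0)" by blast
  qed
  then obtain psi :: "nat \<Rightarrow> complex \<Rightarrow> real" where
    psi_c: "\<And>m. continuous_on UNIV (psi m)" and psi_r: "\<And>m z. psi m z \<in> closed_segment 1 0"
    and psi_1: "\<And>m z. z \<in> cis ` TT m \<Longrightarrow> psi m z = 1"
    and psi_0: "\<And>m z. z \<in> cis ` ({0..2*pi} - UU m) \<Longrightarrow> psi m z = 0"
    by metis
  have psi_b: "\<bar>psi m z\<bar> \<le> 1" for m z using psi_r[of m z] by (auto simp: closed_segment_eq_real_ivl)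
  define phi where "phi m x = complex_of_real (psi m (cis x))" for m x
  have phi_c: "continuous_on UNIV (phi m)" for m
    unfolding phi_def by (intro continuous_intros continuous_on_compose2[OF psi_c[of m]]) auto
  have int0: "integral\<^sup>L MT (\<lambda>x. h x * phi m x) = 0" for m
    unfolding phi_def by (rule int_cont_zero[OF psi_c])
  have lim: "AE x in MT. (\<lambda>m. h x * phi m x) \<longlonglongrightarrow> indicator A x *\<^sub>R h x"
    using AEZ
  proof (rule AE_mp, intro AE_I2 impI)
    fix x assume xI: "x \<in> space MT" and xZ: "x \<notin> Z"
    then have x0: "0 < x" "x < 2*pi" using xI unfolding Z_def by auto
    show "(\<lambda>m. h x * phi m x) \<longlonglongrightarrow> indicator A x *\<^sub>R h x"
    proof (cases "x \<in> (\<Union>m. TT m)")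
      case True
      then obtain m0 where m0: "x \<in> TT m0" by auto
      have "x \<in> A" using m0 TT_sub A'_def by auto
      have "\<forall>\<^sub>F m in sequentially. h x * phi m x = indicator A x *\<^sub>R h x"
        unfolding eventually_sequentially
      proof (intro exI[of _ m0] allI impI)
        fix m assume "m0 \<le> m"
        then have "x \<in> TT m" using TT_mono m0 by auto
        then have "phi m x = 1" unfolding phi_def using psi_1 by auto
        then show "h x * phi m x = indicator A x *\<^sub>R h x" using \<open>x \<in> A\<close> by simp
      qed
      then show ?thesis by (rule tendsto_eventually)
    next
      case False
      then have "x \<notin> (\<Inter>m. UU m)" using xZ unfolding Z_def Z0_def by auto
      then obtain m0 where m0: "x \<notin> UU m0" by auto
      have "x \<notin> A"
      proof
        assume "x \<in> A"
        then have "x \<in> A'" using x0 A'_def by auto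
        then show False using UU_sup m0 by auto
      qed
      have "\<forall>\<^sub>F m in sequentially. h x * phi m x = indicator A x *\<^sub>R h x"
        unfolding eventually_sequentially
      proof (intro exI[of _ m0] allI impI)
        fix m assume "m0 \<le> m"
        then have "x \<notin> UU m" using UU_anti m0 by auto
        then have "x \<in> {0..2*pi} - UU m" using xI by auto
        then have "phi m x = 0" unfolding phi_def using psi_0 by auto
        then show "h x * phi m x = indicator A x *\<^sub>R h x" using \<open>x \<notin> A\<close> by simp
      qed
      then show ?thesis by (rule tendsto_eventually)
    qed
  qed
  have conv: "(\<lambda>m. integral\<^sup>L MT (\<lambda>x. h x * phi m x)) \<longlonglongrightarrow> integral\<^sup>L MT (\<lambda>x. indicator A x *\<^sub>R h x)"
  proof (rule integral_dominated_convergence[OF _ _ integrable_norm[OF h] lim])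
    show "(\<lambda>x. indicator A x *\<^sub>R h x) \<in> borel_measurable MT"
      using integrable_mult_indicator[OF A h] by (rule borel_measurable_integrable)
    show "(\<lambda>x. h x * phi m x) \<in> borel_measurable MT" for m
      using int_mult_cont[OF h phi_c] by (rule borel_measurable_integrable)
    show "AE x in MT. norm (h x * phi m x) \<le> norm (h x)" for m
    proof (intro AE_I2)
      fix x
      have "norm (h x * phi m x) = norm (h x) * \<bar>psi m (cis x)\<bar>" unfolding phi_def by (simp add: norm_mult)
      also have "\<dots> \<le> norm (h x) * 1" by (rule mult_left_mono[OF psi_b]) simp
      finally show "norm (h x * phi m x) \<le> norm (h x)" by simp
    qed
  qed
  then have "(\<lambda>m. 0) \<longlonglongrightarrow> integral\<^sup>L MT (\<lambda>x. indicator A x *\<^sub>R h x)" using int0 by simp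
  then show ?thesis unfolding set_lebesgue_integral_def by (simp add: LIMSEQ_const_iff)
qed

lemma UNIQ: "AE x in MT. h x = 0"
proof -
  interpret F: finite_measure MT by (rule finite_measure_lebesgue_on) simp
  show ?thesis by (rule F.density_zero[OF h set_int_zero])
qed

end



lemma REP:
  assumes g: "integrable MT g" and c: "(\<lambda>k. norm (fourier_coeff g k)) summable_on UNIV"
  shows "AE x in MT. g x = FS (fourier_coeff g) x"
proof -
  define h where "h x = g x - FS (fourier_coeff g) x" for x
  have iF: "integrable MT (FS (fourier_coeff g))" by (rule int_cont[OF FS_cont[OF c]])
  have ih: "integrable MT h" unfolding h_def[abs_def] using g iF by simp
  have "integral\<^sup>L MT (\<lambda>x. h x * ee k x) = 0" for k
  proof -
    have i1: "integrable MT (\<lambda>x. g x * ee k x)" by (rule int_mult_cont[OF g ee_cont])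
    have i2: "integrable MT (\<lambda>x. FS (fourier_coeff g) x * ee k x)" by (rule int_mult_cont[OF iF ee_cont])
    have "fourier_coeff (FS (fourier_coeff g)) (-k) = fourier_coeff g (-k)" by (rule fc_FS[OF c])
    then have "integral\<^sup>L MT (\<lambda>x. FS (fourier_coeff g) x * ee k x) = integral\<^sup>L MT (\<lambda>x. g x * ee k x)"
      unfolding fc_alt by simp
    moreover have "integral\<^sup>L MT (\<lambda>x. h x * ee k x) = integral\<^sup>L MT (\<lambda>x. g x * ee k x) - integral\<^sup>L MT (\<lambda>x. FS (fourier_coeff g) x * ee k x)"
      unfolding h_def using Bochner_Integration.integral_diff[OF i1 i2] by (simp add: left_diff_distrib)
    ultimately show ?thesis by simp
  qed
  then interpret zc h using ih by unfold_locales
  show ?thesis using UNIQ by eventually_elim (simp add: h_def)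
qed

lemma L1T_int: "L1T f \<Longrightarrow> integrable MT f"
  unfolding L1T_def by simp

lemma PROD:
  assumes g: "L1T g" and f: "L1T f"
    and a: "(\<lambda>k. norm (fourier_coeff g k)) summable_on UNIV"
    and c: "(\<lambda>k. norm (fourier_coeff f k)) summable_on UNIV"
  shows "L1T (\<lambda>x. g x * f x)"
    and "fourier_coeff (\<lambda>x. g x * f x) n = (\<Sum>\<^sub>\<infinity>j. fourier_coeff g j * fourier_coeff f (n - j))"
proof -
  have ig: "integrable MT g" and if': "integrable MT f" using g f by (auto simp: L1T_int)
  have mg: "g \<in> borel_measurable MT" and mf: "f \<in> borel_measurable MT" using ig if' by auto
  have AEg: "AE x in MT. g x = FS (fourier_coeff g) x" by (rule REP[OF ig a])
  have AEf: "AE x in MT. f x = FS (fourier_coeff f) x" by (rule REP[OF if' c])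
  have AEp: "AE x in MT. g x * f x = FS (fourier_coeff g) x * FS (fourier_coeff f) x"
    using AEg AEf by eventually_elim simp
  have cP: "continuous_on UNIV (\<lambda>x. FS (fourier_coeff g) x * FS (fourier_coeff f) x)"
    by (intro continuous_intros FS_cont a c)
  have mP: "(\<lambda>x. FS (fourier_coeff g) x * FS (fourier_coeff f) x) \<in> borel_measurable MT" by (rule meas_cont[OF cP])
  have mp: "(\<lambda>x. g x * f x) \<in> borel_measurable MT" using mg mf by measurable
  have "integrable MT (\<lambda>x. g x * f x)"
    using integrable_cong_AE[OF mp mP AEp] int_cont[OF cP] by simp
  moreover have "g (x + 2*pi) * f (x + 2*pi) = g x * f x" for x using g f unfolding L1T_def by simp
  ultimately show "L1T (\<lambda>x. g x * f x)" unfolding L1T_def by simp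
  have "integral\<^sup>L MT (\<lambda>x. g x * f x * ee (-n) x) = integral\<^sup>L MT (\<lambda>x. FS (fourier_coeff g) x * FS (fourier_coeff f) x * ee (-n) x)"
  proof (rule integral_cong_AE)
    show "(\<lambda>x. g x * f x * ee (- n) x) \<in> borel_measurable MT" using mp meas_cont[OF ee_cont] by measurable
    show "(\<lambda>x. FS (fourier_coeff g) x * FS (fourier_coeff f) x * ee (- n) x) \<in> borel_measurable MT"
      using mP meas_cont[OF ee_cont] by measurable
    show "AE x in MT. g x * f x * ee (- n) x = FS (fourier_coeff g) x * FS (fourier_coeff f) x * ee (- n) x"
      using AEp by eventually_elim simp
  qed
  then have "fourier_coeff (\<lambda>x. g x * f x) n = fourier_coeff (\<lambda>x. FS (fourier_coeff g) x * FS (fourier_coeff f) x) n"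
    unfolding fc_alt by simp
  also have "\<dots> = (\<Sum>\<^sub>\<infinity>j. fourier_coeff g j * fourier_coeff f (n - j))" by (rule fc_prod[OF a c])
  finally show "fourier_coeff (\<lambda>x. g x * f x) n = (\<Sum>\<^sub>\<infinity>j. fourier_coeff g j * fourier_coeff f (n - j))" .
qed



lemma prod_has_sum:
  fixes u v :: "int \<Rightarrow> real"
  assumes u0: "\<And>j. 0 \<le> u j" and v0: "\<And>l. 0 \<le> v l"
    and u: "u summable_on UNIV" and v: "v summable_on UNIV"
  shows "((\<lambda>(j,l). u j * v l) has_sum (infsum u UNIV * infsum v UNIV)) UNIV"
proof -
  have inner: "((\<lambda>l. u j * v l) has_sum (u j * infsum v UNIV)) UNIV" for j
    by (rule has_sum_cmult_right[OF has_sum_infsum[OF v]])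
  have outer: "((\<lambda>j. u j * infsum v UNIV) has_sum (infsum u UNIV * infsum v UNIV)) UNIV"
    by (rule has_sum_cmult_left[OF has_sum_infsum[OF u]])
  have inner': "((\<lambda>l. (\<lambda>(j,l). u j * v l) (j, l)) has_sum (u j * infsum v UNIV)) UNIV" for j
    using inner by simp
  have summ: "(\<lambda>(j,l). u j * v l) summable_on Sigma UNIV (\<lambda>_. UNIV)"
    by (rule summable_on_SigmaI[OF inner' has_sum_imp_summable[OF outer]]) (auto intro: mult_nonneg_nonneg u0 v0)
  have "((\<lambda>(j,l). u j * v l) has_sum (infsum u UNIV * infsum v UNIV)) (Sigma UNIV (\<lambda>_. UNIV))"
    by (rule has_sum_SigmaI[OF inner' outer summ])
  then show ?thesis by simp
qed

lemma CONV:
  fixes a b :: "int \<Rightarrow> complex" and W A1 B1 A2 B2 :: "int \<Rightarrow> real" and C :: real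
  assumes W1: "\<And>k. 1 \<le> W k"
    and nn: "\<And>k. 0 \<le> A1 k" "\<And>k. 0 \<le> B1 k" "\<And>k. 0 \<le> A2 k" "\<And>k. 0 \<le> B2 k" and C0: "0 \<le> C"
    and Wb: "\<And>j l. W (j + l) \<le> C * (A1 j * B1 l + A2 j * B2 l)"
    and sa1: "(\<lambda>j. A1 j * norm (a j)) summable_on UNIV"
    and sb1: "(\<lambda>j. B1 j * norm (b j)) summable_on UNIV"
    and sa2: "(\<lambda>j. A2 j * norm (a j)) summable_on UNIV"
    and sb2: "(\<lambda>j. B2 j * norm (b j)) summable_on UNIV"
  shows "(\<lambda>k. W k * norm (\<Sum>\<^sub>\<infinity>j. a j * b (k - j))) summable_on UNIV"
    and "(\<Sum>\<^sub>\<infinity>k. W k * norm (\<Sum>\<^sub>\<infinity>j. a j * b (k - j)))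
          \<le> C * ((\<Sum>\<^sub>\<infinity>j. A1 j * norm (a j)) * (\<Sum>\<^sub>\<infinity>j. B1 j * norm (b j))
               + (\<Sum>\<^sub>\<infinity>j. A2 j * norm (a j)) * (\<Sum>\<^sub>\<infinity>j. B2 j * norm (b j)))"
proof -
  define P where "P = C * ((\<Sum>\<^sub>\<infinity>j. A1 j * norm (a j)) * (\<Sum>\<^sub>\<infinity>j. B1 j * norm (b j))
               + (\<Sum>\<^sub>\<infinity>j. A2 j * norm (a j)) * (\<Sum>\<^sub>\<infinity>j. B2 j * norm (b j)))"
  define p where "p = (\<lambda>(j,l). C * ((A1 j * norm (a j)) * (B1 l * norm (b l)) + (A2 j * norm (a j)) * (B2 l * norm (b l))))"
  define q where "q = (\<lambda>(j,l). W (j + l) * norm (a j) * norm (b l))"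
  have h1: "((\<lambda>(j,l). (A1 j * norm (a j)) * (B1 l * norm (b l))) has_sum
      ((\<Sum>\<^sub>\<infinity>j. A1 j * norm (a j)) * (\<Sum>\<^sub>\<infinity>j. B1 j * norm (b j)))) UNIV"
    by (rule prod_has_sum[OF _ _ sa1 sb1]) (auto intro!: mult_nonneg_nonneg nn)
  have h2: "((\<lambda>(j,l). (A2 j * norm (a j)) * (B2 l * norm (b l))) has_sum
      ((\<Sum>\<^sub>\<infinity>j. A2 j * norm (a j)) * (\<Sum>\<^sub>\<infinity>j. B2 j * norm (b j)))) UNIV"
    by (rule prod_has_sum[OF _ _ sa2 sb2]) (auto intro!: mult_nonneg_nonneg nn)
  have hp: "(p has_sum P) UNIV"
    using has_sum_cmult_right[OF has_sum_add[OF h1 h2], of C] unfolding p_def P_def split_def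
    by simp
  have q0: "0 \<le> q x" for x unfolding q_def using W1 by (auto simp: case_prod_beta intro!: mult_nonneg_nonneg) (meson order_trans zero_le_one)
  have qp: "q x \<le> p x" for x
  proof -
    obtain j l where x: "x = (j, l)" by (cases x)
    have "W (j + l) * (norm (a j) * norm (b l)) \<le> C * (A1 j * B1 l + A2 j * B2 l) * (norm (a j) * norm (b l))"
      by (rule mult_right_mono[OF Wb]) simp
    then show ?thesis unfolding x q_def p_def by (simp add: algebra_simps)
  qed
  have qs: "q summable_on UNIV"
    by (rule summable_on_comparison_test[OF has_sum_imp_summable[OF hp] qp q0])
  have qle: "infsum q UNIV \<le> P"
    using infsum_mono[OF qs has_sum_imp_summable[OF hp] qp] hp infsumI by metis
  define r where "r k j = W k * norm (a j) * norm (b (k - j))" for k j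
  define \<sigma> where "\<sigma> = (\<lambda>(k::int, j::int). (j, k - j))"
  have bij: "bij_betw \<sigma> UNIV UNIV"
    by (rule bij_betwI[where g = "\<lambda>(j, l). (j + l, j)"]) (auto simp: \<sigma>_def)
  have rq: "(\<lambda>(k,j). r k j) = (\<lambda>x. q (\<sigma> x))"
    by (auto simp: r_def q_def \<sigma>_def fun_eq_iff)
  have rs: "(\<lambda>(k,j). r k j) summable_on UNIV"
    unfolding rq using summable_on_reindex_bij_betw[OF bij, of q] qs by simp
  have rsum: "infsum (\<lambda>(k,j). r k j) UNIV = infsum q UNIV"
    unfolding rq by (rule infsum_reindex_bij_betw[OF bij])
  have rs': "(\<lambda>(k,j). r k j) summable_on Sigma UNIV (\<lambda>_. UNIV)" using rs by simp
  have R: "(\<lambda>k. infsum (r k) UNIV) summable_on UNIV"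
    using summable_on_Sigma_banach[OF rs'] .
  have Rsum: "infsum (\<lambda>k. infsum (r k) UNIV) UNIV = infsum (\<lambda>(k,j). r k j) UNIV"
    using infsum_Sigma'_banach[OF rs'] by simp
  have rk: "r k summable_on UNIV" for k
    using summable_on_SigmaD1[OF rs'] by simp
  have bound: "W k * norm (\<Sum>\<^sub>\<infinity>j. a j * b (k - j)) \<le> infsum (r k) UNIV" for k
  proof -
    have Wk: "W k > 0" using W1[of k] by simp
    have "(\<lambda>j. (1 / W k) * r k j) summable_on UNIV" by (rule summable_on_cmult_right[OF rk])
    moreover have "(\<lambda>j. (1 / W k) * r k j) = (\<lambda>j. norm (a j * b (k - j)))"
      using Wk by (auto simp: r_def fun_eq_iff norm_mult)
    ultimately have ns: "(\<lambda>j. norm (a j * b (k - j))) summable_on UNIV" by simp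
    have "norm (\<Sum>\<^sub>\<infinity>j. a j * b (k - j)) \<le> (\<Sum>\<^sub>\<infinity>j. norm (a j * b (k - j)))"
      by (rule norm_infsum_le[OF has_sum_infsum[OF abs_summable_summable[OF ns]] has_sum_infsum[OF ns]]) simp
    then have "W k * norm (\<Sum>\<^sub>\<infinity>j. a j * b (k - j)) \<le> W k * (\<Sum>\<^sub>\<infinity>j. norm (a j * b (k - j)))"
      using Wk by simp
    also have "\<dots> = (\<Sum>\<^sub>\<infinity>j. W k * norm (a j * b (k - j)))" by (simp add: infsum_cmult_right')
    also have "\<dots> = infsum (r k) UNIV" unfolding r_def[abs_def] by (simp add: norm_mult mult.assoc)
    finally show ?thesis .
  qed
  have lhs0: "0 \<le> W k * norm (\<Sum>\<^sub>\<infinity>j. a j * b (k - j))" for k using W1[of k] by simp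
  show S: "(\<lambda>k. W k * norm (\<Sum>\<^sub>\<infinity>j. a j * b (k - j))) summable_on UNIV"
    by (rule summable_on_comparison_test[OF R bound lhs0])
  have "(\<Sum>\<^sub>\<infinity>k. W k * norm (\<Sum>\<^sub>\<infinity>j. a j * b (k - j))) \<le> infsum (\<lambda>k. infsum (r k) UNIV) UNIV"
    by (rule infsum_mono[OF S R bound])
  also have "\<dots> \<le> P" using Rsum rsum qle by simp
  finally show "(\<Sum>\<^sub>\<infinity>k. W k * norm (\<Sum>\<^sub>\<infinity>j. a j * b (k - j))) \<le> C * ((\<Sum>\<^sub>\<infinity>j. A1 j * norm (a j)) * (\<Sum>\<^sub>\<infinity>j. B1 j * norm (b j))
               + (\<Sum>\<^sub>\<infinity>j. A2 j * norm (a j)) * (\<Sum>\<^sub>\<infinity>j. B2 j * norm (b j)))" unfolding P_def .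
qed



definition Cs :: "real \<Rightarrow> real" where "Cs s = (if s \<le> 1 then 1 else K_s s)"

lemma Cs_ge1: "1 \<le> Cs s"
  unfolding Cs_def K_s_def by (auto intro: ge_one_powr_ge_zero)

lemma powr_sum_le:
  fixes x y s :: real
  assumes x: "x > 0" and y: "y > 0" and s: "s \<ge> 0"
  shows "(x + y) powr s \<le> Cs s * (x powr s + y powr s)"
proof (cases "s \<le> 1")
  case True
  have px: "x powr s = x * x powr (s - 1)" using powr_add[of x 1 "s - 1"] x by (simp add: powr_one)
  have py: "y powr s = y * y powr (s - 1)" using powr_add[of y 1 "s - 1"] y by (simp add: powr_one)
  have pxy: "(x + y) powr s = (x + y) * (x + y) powr (s - 1)"
    using powr_add[of "x + y" 1 "s - 1"] x y by (simp add: powr_one)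
  have mx: "(x + y) powr (s - 1) \<le> x powr (s - 1)" by (rule powr_mono2') (use True x y in auto)
  have my: "(x + y) powr (s - 1) \<le> y powr (s - 1)" by (rule powr_mono2') (use True x y in auto)
  have "(x + y) powr s = x * (x + y) powr (s - 1) + y * (x + y) powr (s - 1)"
    unfolding pxy by (simp add: algebra_simps)
  also have "\<dots> \<le> x * x powr (s - 1) + y * y powr (s - 1)"
    using mult_left_mono[OF mx] mult_left_mono[OF my] x y by (intro add_mono) auto
  also have "\<dots> = x powr s + y powr s" using px py by simp
  finally show ?thesis using True by (simp add: Cs_def)
next
  case False
  have cv: "convex_on {0<..} (\<lambda>x. x powr s)" by (rule powr_convex) (use False in simp)
  have "((1 - 1/2) *\<^sub>R x + (1/2) *\<^sub>R y) powr s \<le> (1 - 1/2) * x powr s + (1/2) * y powr s"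
    by (rule convex_onD[OF cv]) (use x y in auto)
  then have "((x + y) / 2) powr s \<le> (x powr s + y powr s) / 2" by (simp add: field_simps)
  then have "(x + y) powr s / 2 powr s \<le> (x powr s + y powr s) / 2" by (simp add: powr_divide)
  then have "(x + y) powr s \<le> 2 powr s * ((x powr s + y powr s) / 2)"
    by (simp add: divide_le_eq mult.commute)
  also have "\<dots> = 2 powr (s - 1) * (x powr s + y powr s)" by (simp add: powr_diff)
  finally show ?thesis using False by (simp add: Cs_def K_s_def)
qed

lemma ww_ge1: "0 \<le> s \<Longrightarrow> 0 \<le> lam \<Longrightarrow> 1 \<le> wiener_weight s lam n"
proof -
  assume s: "0 \<le> s" and lam: "0 \<le> lam"
  have a: "1 \<le> (1 + real_of_int \<bar>n\<bar>) powr s" by (rule ge_one_powr_ge_zero) (use s in auto)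
  have b: "1 \<le> exp (lam * real_of_int \<bar>n\<bar>)" using lam by simp
  have "1 * 1 \<le> (1 + real_of_int \<bar>n\<bar>) powr s * exp (lam * real_of_int \<bar>n\<bar>)"
    by (rule mult_mono[OF a b]) auto
  then show ?thesis unfolding wiener_weight_def by simp
qed

lemma ww0: "wiener_weight 0 lam n = exp (lam * real_of_int \<bar>n\<bar>)"
  unfolding wiener_weight_def by simp

lemma ww_mono: "0 \<le> s \<Longrightarrow> wiener_weight 0 lam n \<le> wiener_weight s lam n"
  unfolding wiener_weight_def by (auto intro!: mult_right_mono ge_one_powr_ge_zero)

lemma exp_sub: "0 \<le> lam \<Longrightarrow> exp (lam * real_of_int \<bar>j + l\<bar>) \<le> exp (lam * real_of_int \<bar>j\<bar>) * exp (lam * real_of_int \<bar>l\<bar>)"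
proof -
  assume lam: "0 \<le> lam"
  have "lam * real_of_int \<bar>j + l\<bar> \<le> lam * (real_of_int \<bar>j\<bar> + real_of_int \<bar>l\<bar>)"
    by (rule mult_left_mono[OF _ lam]) linarith
  then have "lam * real_of_int \<bar>j + l\<bar> \<le> lam * real_of_int \<bar>j\<bar> + lam * real_of_int \<bar>l\<bar>"
    by (simp add: distrib_left)
  then show ?thesis by (simp add: exp_add[symmetric])
qed

lemma ww_sub:
  assumes s: "0 \<le> s" and lam: "0 \<le> lam"
  shows "wiener_weight s lam (j + l) \<le> Cs s * (wiener_weight s lam j * wiener_weight 0 lam l
           + wiener_weight 0 lam j * wiener_weight s lam l)"
proof -
  define x where "x = 1 + real_of_int \<bar>j\<bar>"
  define y where "y = 1 + real_of_int \<bar>l\<bar>"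
  define Ej where "Ej = exp (lam * real_of_int \<bar>j\<bar>)"
  define El where "El = exp (lam * real_of_int \<bar>l\<bar>)"
  have x0: "x > 0" and y0: "y > 0" unfolding x_def y_def by auto
  have "(1 + real_of_int \<bar>j + l\<bar>) powr s \<le> (x + y) powr s"
    by (rule powr_mono2) (use s in \<open>auto simp: x_def y_def\<close>)
  also have "\<dots> \<le> Cs s * (x powr s + y powr s)" by (rule powr_sum_le[OF x0 y0 s])
  finally have P: "(1 + real_of_int \<bar>j + l\<bar>) powr s \<le> Cs s * (x powr s + y powr s)" .
  have E: "exp (lam * real_of_int \<bar>j + l\<bar>) \<le> Ej * El" unfolding Ej_def El_def by (rule exp_sub[OF lam])
  have "wiener_weight s lam (j + l) \<le> (Cs s * (x powr s + y powr s)) * (Ej * El)"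
    unfolding wiener_weight_def by (rule mult_mono[OF P E]) (use Cs_ge1[of s] x0 y0 in \<open>auto intro!: mult_nonneg_nonneg add_nonneg_nonneg\<close>)
  also have "\<dots> = Cs s * ((x powr s * Ej) * El + Ej * (y powr s * El))" by (simp add: algebra_simps)
  finally show ?thesis unfolding ww0 unfolding wiener_weight_def x_def y_def Ej_def El_def .
qed

lemma ww0_sub:
  assumes lam: "0 \<le> lam"
  shows "wiener_weight 0 lam (j + l) \<le> 1 * (wiener_weight 0 lam j * wiener_weight 0 lam l + (\<lambda>_. 0::real) j * (\<lambda>_. 0::real) l)"
  using exp_sub[OF lam] by (simp add: ww0)



lemma ws_abs:
  assumes "f \<in> wiener_space s lam" "0 \<le> s" "0 \<le> lam"
  shows "(\<lambda>k. norm (fourier_coeff f k)) summable_on UNIV"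
proof (rule summable_on_comparison_test)
  show "(\<lambda>n. wiener_weight s lam n * cmod (fourier_coeff f n)) summable_on UNIV"
    using assms(1) unfolding wiener_space_def by simp
  show "norm (fourier_coeff f k) \<le> wiener_weight s lam k * cmod (fourier_coeff f k)" for k
    using mult_right_mono[OF ww_ge1[OF assms(2,3), of k] norm_ge_zero[of "fourier_coeff f k"]] by simp
qed auto

lemma STEP:
  assumes s: "0 \<le> s" and lam: "0 \<le> lam"
    and gs: "g \<in> wiener_space s lam" and g0: "g \<in> wiener_space 0 lam"
    and fs: "f \<in> wiener_space s lam" and f0: "f \<in> wiener_space 0 lam"
  shows "(\<lambda>x. g x * f x) \<in> wiener_space s lam" "(\<lambda>x. g x * f x) \<in> wiener_space 0 lam"
    "wiener_norm 0 lam (\<lambda>x. g x * f x) \<le> wiener_norm 0 lam g * wiener_norm 0 lam f"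
    "wiener_norm s lam (\<lambda>x. g x * f x) \<le> Cs s * (wiener_norm s lam g * wiener_norm 0 lam f
        + wiener_norm 0 lam g * wiener_norm s lam f)"
proof -
  define a where "a = fourier_coeff g"
  define b where "b = fourier_coeff f"
  have Lg: "L1T g" and Lf: "L1T f" using gs fs unfolding wiener_space_def by auto
  have sas: "(\<lambda>n. wiener_weight s lam n * norm (a n)) summable_on UNIV"
   and sa0: "(\<lambda>n. wiener_weight 0 lam n * norm (a n)) summable_on UNIV"
   and sbs: "(\<lambda>n. wiener_weight s lam n * norm (b n)) summable_on UNIV"
   and sb0: "(\<lambda>n. wiener_weight 0 lam n * norm (b n)) summable_on UNIV"
    using gs g0 fs f0 unfolding wiener_space_def a_def b_def by auto
  have aa: "(\<lambda>k. norm (a k)) summable_on UNIV" unfolding a_def by (rule ws_abs[OF gs s lam])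
  have ba: "(\<lambda>k. norm (b k)) summable_on UNIV" unfolding b_def by (rule ws_abs[OF fs s lam])
  have L: "L1T (\<lambda>x. g x * f x)" by (rule PROD(1)[OF Lg Lf aa[unfolded a_def] ba[unfolded b_def]])
  have fc: "fourier_coeff (\<lambda>x. g x * f x) = (\<lambda>n. \<Sum>\<^sub>\<infinity>j. a j * b (n - j))"
    unfolding a_def b_def using PROD(2)[OF Lg Lf aa[unfolded a_def] ba[unfolded b_def]] by auto
  have nn: "0 \<le> wiener_weight s lam k" "0 \<le> wiener_weight 0 lam k" for k
    using ww_ge1[OF s lam, of k] ww_ge1[OF order_refl lam, of k] by auto
  note Cs = CONV[of "wiener_weight s lam" "wiener_weight s lam" "wiener_weight 0 lam" "wiener_weight 0 lam"
      "wiener_weight s lam" "Cs s" a b, OF ww_ge1[OF s lam] nn(1) nn(2) nn(2) nn(1) _ ww_sub[OF s lam] sas sb0 sa0 sbs]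
  note C0 = CONV[of "wiener_weight 0 lam" "wiener_weight 0 lam" "wiener_weight 0 lam" "\<lambda>_. 0" "\<lambda>_. 0" 1 a b,
      OF ww_ge1[OF order_refl lam] nn(2) nn(2) _ _ _ ww0_sub[OF lam] sa0 sb0]
  have c0: "0 \<le> Cs s" using Cs_ge1[of s] by simp
  show "(\<lambda>x. g x * f x) \<in> wiener_space s lam"
    unfolding wiener_space_def using L Cs(1)[OF c0] by (simp add: fc)
  show "(\<lambda>x. g x * f x) \<in> wiener_space 0 lam"
    unfolding wiener_space_def using L C0(1) by (simp add: fc)
  show "wiener_norm 0 lam (\<lambda>x. g x * f x) \<le> wiener_norm 0 lam g * wiener_norm 0 lam f"
    unfolding wiener_norm_def using C0(2) by (simp add: fc a_def b_def)
  show "wiener_norm s lam (\<lambda>x. g x * f x) \<le> Cs s * (wiener_norm s lam g * wiener_norm 0 lam f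
        + wiener_norm 0 lam g * wiener_norm s lam f)"
    unfolding wiener_norm_def using Cs(2)[OF c0] by (simp add: fc a_def b_def)
qed



definition Bs :: "real \<Rightarrow> nat \<Rightarrow> real" where "Bs s m = (if m = 1 then 1 else K_sn s m)"

lemma geo_step:
  fixes K :: real
  assumes K: "1 \<le> K" and n: "1 \<le> n"
  shows "K * (\<Sum>j=1..n. (2*K)^j) + K \<le> (\<Sum>j=1..Suc n. (2*K)^j)"
  using n
proof (induction n rule: dec_induct)
  case base
  have "K * (2*K) + K \<le> 2*K + (2*K)^2" using K by (simp add: power2_eq_square algebra_simps)
  then show ?case by (simp add: numeral_2_eq_2)
next
  case (step n)
  have "K * (\<Sum>j=1..Suc n. (2*K)^j) + K = (K * (\<Sum>j=1..n. (2*K)^j) + K) + K * (2*K)^Suc n"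
    by (simp add: algebra_simps)
  also have "\<dots> \<le> (\<Sum>j=1..Suc n. (2*K)^j) + (2*K)^Suc (Suc n)"
  proof (rule add_mono[OF step.IH])
    have "K * (2*K)^Suc n \<le> (2*K) * (2*K)^Suc n" using K by (intro mult_right_mono) auto
    then show "K * (2*K)^Suc n \<le> (2*K)^Suc (Suc n)" by simp
  qed
  also have "\<dots> = (\<Sum>j=1..Suc (Suc n). (2*K)^j)" by simp
  finally show ?case .
qed

lemma B_rec:
  assumes s: "0 \<le> s" and m: "1 \<le> m"
  shows "Cs s * (Bs s m + 1) \<le> Bs s (Suc m)"
proof (cases "s \<le> 1")
  case True
  then show ?thesis using m by (simp add: Cs_def Bs_def K_sn_def)
next
  case False
  define K where "K = K_s s"
  have K1: "1 \<le> K" unfolding K_def K_s_def using False by (auto intro: ge_one_powr_ge_zero)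
  show ?thesis
  proof (cases "m = 1")
    case True
    then show ?thesis using False by (simp add: Cs_def Bs_def K_sn_def K_def)
  next
    case m1: False
    then obtain n where n: "m = Suc n" "1 \<le> n" using m by (cases m) auto
    have "Cs s * (Bs s m + 1) = K * (\<Sum>j=1..n. (2*K)^j) + K"
      using False m1 n by (simp add: Cs_def Bs_def K_sn_def K_def algebra_simps)
    also have "\<dots> \<le> (\<Sum>j=1..Suc n. (2*K)^j)" by (rule geo_step[OF K1 n(2)])
    also have "\<dots> = Bs s (Suc m)" using False n by (simp add: Bs_def K_sn_def K_def)
    finally show ?thesis .
  qed
qed

lemma ws0:
  assumes "f \<in> wiener_space s lam" "0 \<le> s" "0 \<le> lam"
  shows "f \<in> wiener_space 0 lam"
  unfolding wiener_space_def
proof (intro CollectI conjI)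
  show "L1T f" using assms(1) unfolding wiener_space_def by simp
  show "(\<lambda>n. wiener_weight 0 lam n * cmod (fourier_coeff f n)) summable_on UNIV"
  proof (rule summable_on_comparison_test)
    show "(\<lambda>n. wiener_weight s lam n * cmod (fourier_coeff f n)) summable_on UNIV"
      using assms(1) unfolding wiener_space_def by simp
    show "wiener_weight 0 lam n * cmod (fourier_coeff f n) \<le> wiener_weight s lam n * cmod (fourier_coeff f n)" for n
      by (rule mult_right_mono[OF ww_mono[OF assms(2)]]) simp
    show "0 \<le> wiener_weight 0 lam n * cmod (fourier_coeff f n)" for n
      using ww_ge1[OF order_refl assms(3), of n] by simp
  qed
qed

lemma wn_nonneg: "0 \<le> s \<Longrightarrow> 0 \<le> lam \<Longrightarrow> 0 \<le> wiener_norm s lam f"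
  unfolding wiener_norm_def using ww_ge1 by (intro infsum_nonneg) (metis mult_nonneg_nonneg norm_ge_zero order_trans zero_le_one)

lemma POW:
  assumes s: "0 \<le> s" and lam: "0 \<le> lam" and f: "f \<in> wiener_space s lam" and m: "1 \<le> m"
  shows "(\<lambda>x. f x ^ m) \<in> wiener_space s lam \<and> (\<lambda>x. f x ^ m) \<in> wiener_space 0 lam
    \<and> wiener_norm 0 lam (\<lambda>x. f x ^ m) \<le> wiener_norm 0 lam f ^ m
    \<and> wiener_norm s lam (\<lambda>x. f x ^ m) \<le> Bs s m * wiener_norm 0 lam f ^ (m - 1) * wiener_norm s lam f"
  using m
proof (induction m rule: dec_induct)
  case base
  have "(\<lambda>x. f x ^ 1) = f" by auto
  then show ?case using f ws0[OF f s lam] by (simp add: Bs_def)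
next
  case (step m)
  define g where "g = (\<lambda>x. f x ^ m)"
  define N0 where "N0 = wiener_norm 0 lam f"
  define Ns where "Ns = wiener_norm s lam f"
  define G0 where "G0 = wiener_norm 0 lam g"
  define Gs where "Gs = wiener_norm s lam g"
  have IH: "g \<in> wiener_space s lam" "g \<in> wiener_space 0 lam" "G0 \<le> N0 ^ m" "Gs \<le> Bs s m * N0 ^ (m - 1) * Ns"
    using step.IH unfolding g_def G0_def Gs_def N0_def Ns_def by auto
  have eq: "(\<lambda>x. f x ^ Suc m) = (\<lambda>x. g x * f x)" unfolding g_def by (simp add: mult.commute)
  note ST = STEP[OF s lam IH(1) IH(2) f ws0[OF f s lam]]
  have N0n: "0 \<le> N0" and Nsn: "0 \<le> Ns" and G0n: "0 \<le> G0"
    unfolding N0_def Ns_def G0_def using wn_nonneg s lam by auto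
  have c0: "0 \<le> Cs s" using Cs_ge1[of s] by simp
  have b0: "wiener_norm 0 lam (\<lambda>x. g x * f x) \<le> N0 ^ Suc m"
  proof -
    have "wiener_norm 0 lam (\<lambda>x. g x * f x) \<le> G0 * N0" using ST(3) unfolding G0_def N0_def .
    also have "\<dots> \<le> N0 ^ m * N0" by (rule mult_right_mono[OF IH(3) N0n])
    finally show ?thesis by (simp add: mult.commute)
  qed
  have bs: "wiener_norm s lam (\<lambda>x. g x * f x) \<le> Bs s (Suc m) * N0 ^ m * Ns"
  proof -
    have "wiener_norm s lam (\<lambda>x. g x * f x) \<le> Cs s * (Gs * N0 + G0 * Ns)"
      using ST(4) unfolding G0_def Gs_def N0_def Ns_def .
    also have "\<dots> \<le> Cs s * ((Bs s m * N0 ^ (m - 1) * Ns) * N0 + N0 ^ m * Ns)"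
      by (intro mult_left_mono[OF _ c0] add_mono mult_right_mono IH N0n Nsn)
    also have "(Bs s m * N0 ^ (m - 1) * Ns) * N0 = Bs s m * N0 ^ m * Ns"
    proof -
      have "N0 ^ (m - 1) * N0 = N0 ^ m" using step.hyps(1) by (cases m) (simp_all add: mult.commute)
      then show ?thesis by (metis mult.commute mult.left_commute)
    qed
    also have "Cs s * (Bs s m * N0 ^ m * Ns + N0 ^ m * Ns) = (Cs s * (Bs s m + 1)) * (N0 ^ m * Ns)"
      by (simp add: algebra_simps)
    also have "\<dots> \<le> Bs s (Suc m) * (N0 ^ m * Ns)"
      by (rule mult_right_mono[OF B_rec[OF s step.hyps(1)]]) (use N0n Nsn in simp)
    finally show ?thesis by (simp add: mult.assoc)
  qed
  show ?case unfolding eq using ST(1,2) b0 bs unfolding N0_def Ns_def by simp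
qed

theorem proposition3p2:
  fixes s lam :: real and f :: "real \<Rightarrow> complex" and n :: nat
  assumes "s \<ge> 0" and "lam \<ge> 0" and "f \<in> wiener_space s lam" and "n \<ge> 2"
  shows "(s > 0 \<longrightarrow>
            (\<lambda>x. f x ^ n) \<in> wiener_space s lam \<and>
            wiener_norm s lam (\<lambda>x. f x ^ n)
              \<le> K_sn s n * wiener_norm 0 lam f ^ (n - 1) * wiener_norm s lam f)
       \<and> (s = 0 \<longrightarrow>
            (\<lambda>x. f x ^ n) \<in> wiener_space 0 lam \<and>
            wiener_norm 0 lam (\<lambda>x. f x ^ n) \<le> wiener_norm 0 lam f ^ n)"
proof -
  have n1: "1 \<le> n" using assms(4) by simp
  note P = POW[OF assms(1,2,3) n1]
  have "Bs s n = K_sn s n" using assms(4) by (simp add: Bs_def)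
  then show ?thesis using P by simp
qed


end
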